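(* Let $X_1,\dots,X_M$ be i.i.d. random variables taking values in $[k]$, let $\hat p_i=\frac1M\sum_{j=1}^M\mathbf{1}\{X_j=i\}$, and define $L(X_1,\dots,X_M)=\sum_{i=1}^k\hat p_i(1-\hat p_i)$. Then the function $L:[k]^M\to\mathbb{R}$ satisfies the bounded difference property with parameters $c_i=\frac2M$ for all $i\in[M]$, and consequently for every $t>0$, $$\mathbb{P}\left[|L(X_1,\dots,X_M)-\mathbb{E}[L(X_1,\dots,X_M)]|\ge t\right]\le 2\exp\left(-\frac{Mt^2}{2}\right).$$
   Context: A function $f:\mathcal{X}^M\to\mathbb{R}$ has the bounded difference property with parameters $c_1,\dots,c_M$ if for every $i\in[M]$, all $x_1,\dots,x_M,x_i'\in\mathcal{X}$, $|f(x_1,\dots,x_i,\dots,x_M)-f(x_1,\dots,x_i',\dots,x_M)|\le c_i$. *)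

theory Defs
  imports "HOL-Probability.Probability"
begin

text \<open>Bounded difference property for f : S^M -> R, points of S^M represented as
  extensional functions on the index set {1..M}.\<close>
definition bounded_difference ::
  "'a set \<Rightarrow> nat \<Rightarrow> ((nat \<Rightarrow> 'a) \<Rightarrow> real) \<Rightarrow> (nat \<Rightarrow> real) \<Rightarrow> bool" where
  "bounded_difference S M f c \<longleftrightarrow>
     (\<forall>i\<in>{1..M}. \<forall>x\<in>{1..M} \<rightarrow>\<^sub>E S. \<forall>y\<in>S. \<bar>f x - f (x(i := y))\<bar> \<le> c i)"

definition phat :: "nat \<Rightarrow> (nat \<Rightarrow> nat) \<Rightarrow> nat \<Rightarrow> real" where
  "phat M x i = (\<Sum>j\<in>{1..M}. if x j = i then 1 else 0) / real M"

definition Lfun :: "nat \<Rightarrow> nat \<Rightarrow> (nat \<Rightarrow> nat) \<Rightarrow> real" where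
  "Lfun k M x = (\<Sum>i\<in>{1..k}. phat M x i * (1 - phat M x i))"

end

theory Submission imports Defs begin

lemma HL0:
  fixes p h :: "'b \<Rightarrow> real"
  assumes S: "finite S" and p: "\<And>s. s \<in> S \<Longrightarrow> p s \<ge> 0" and p1: "(\<Sum>s\<in>S. p s) = 1"
    and hab: "\<And>s. s \<in> S \<Longrightarrow> h s \<in> {a..b}" and h0: "(\<Sum>s\<in>S. p s * h s) = 0"
    and l: "l > 0"
  shows "(\<Sum>s\<in>S. p s * exp (l * h s)) \<le> exp (l\<^sup>2 * (b - a)\<^sup>2 / 8)"
proof -
  define N where "N = density (count_space S) (\<lambda>s. ennreal (p s))"
  have spN: "space N = S" by (simp add: N_def)
  have "emeasure N (space N) = (\<integral>\<^sup>+ x. ennreal (p x) * indicator S x \<partial>count_space S)"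
    unfolding N_def by (subst emeasure_density) auto
  also have "\<dots> = (\<Sum>x\<in>S. ennreal (p x))"
    using S by (subst nn_integral_count_space_finite) auto
  also have "\<dots> = ennreal (\<Sum>x\<in>S. p x)" using p by (simp add: sum_ennreal)
  finally have "emeasure N (space N) = 1" using p1 by simp
  then interpret N: prob_space N by (rule prob_spaceI)
  interpret ib: interval_bounded_random_variable N h a b
  proof
    show "h \<in> borel_measurable N" by (simp add: N_def)
    show "AE x in N. h x \<in> {a..b}" using hab by (intro AE_I2) (simp add: spN)
  qed
  have E: "N.expectation h = (\<Sum>s\<in>S. p s * h s)"
    unfolding N_def using p S
    by (subst integral_density) (auto simp: lebesgue_integral_count_space_finite)
  have "(\<integral>\<^sup>+x. exp (l * h x) \<partial>N) = (\<Sum>s\<in>S. ennreal (p s * exp (l * h s)))"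
    unfolding N_def using p S
    by (subst nn_integral_density) (auto simp: nn_integral_count_space_finite ennreal_mult)
  also have "\<dots> = ennreal (\<Sum>s\<in>S. p s * exp (l * h s))"
    using p by (intro sum_ennreal) auto
  finally have "ennreal (\<Sum>s\<in>S. p s * exp (l * h s)) \<le> ennreal (exp (l\<^sup>2 * (b - a)\<^sup>2 / 8))"
    using ib.Hoeffdings_lemma_nn_integral_0[OF l] E h0 by simp
  then show ?thesis by (subst (asm) ennreal_le_iff) auto
qed

lemma HL1:
  fixes p h :: "'b \<Rightarrow> real"
  assumes S: "finite S" and p: "\<And>s. s \<in> S \<Longrightarrow> p s \<ge> 0" and p1: "(\<Sum>s\<in>S. p s) = 1"
    and hc: "\<And>s t. s \<in> S \<Longrightarrow> t \<in> S \<Longrightarrow> h s - h t \<le> c" and h0: "(\<Sum>s\<in>S. p s * h s) = 0"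
    and l: "l > 0"
  shows "(\<Sum>s\<in>S. p s * exp (l * h s)) \<le> exp (l\<^sup>2 * c\<^sup>2 / 8)"
proof -
  have "S \<noteq> {}" using p1 by auto
  define a where "a = Min (h ` S)"
  have a1: "a \<le> h s" if "s \<in> S" for s using S that by (simp add: a_def)
  have "a \<in> h ` S" unfolding a_def using S \<open>S \<noteq> {}\<close> by (intro Min_in) auto
  then obtain s0 where s0: "s0 \<in> S" "a = h s0" by auto
  have "h s \<in> {a..a+c}" if "s \<in> S" for s using a1[OF that] hc[OF that s0(1)] s0 by auto
  from HL0[OF S p p1 this h0 l] show ?thesis by simp
qed

definition Ew :: "('b \<Rightarrow> real) \<Rightarrow> 'b set \<Rightarrow> nat set \<Rightarrow> ((nat \<Rightarrow> 'b) \<Rightarrow> real) \<Rightarrow> real" where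
  "Ew p S I f = (\<Sum>x\<in>(I \<rightarrow>\<^sub>E S). (\<Prod>j\<in>I. p (x j)) * f x)"

lemma Ew_empty: "Ew p S {} f = f (\<lambda>_. undefined)"
  by (simp add: Ew_def)

lemma Ew_insert:
  assumes "finite I" "i \<notin> I"
  shows "Ew p S (insert i I) f = Ew p S I (\<lambda>x. \<Sum>y\<in>S. p y * f (x(i:=y)))"
proof -
  have "Ew p S (insert i I) f = (\<Sum>z\<in>S \<times> (I \<rightarrow>\<^sub>E S). (\<Prod>j\<in>insert i I. p (((snd z)(i := fst z)) j)) * f ((snd z)(i := fst z)))"
    unfolding Ew_def PiE_insert_eq
    by (subst sum.reindex[OF inj_combinator[OF assms(2)]]) (simp add: case_prod_beta)
  also have "\<dots> = (\<Sum>z\<in>S \<times> (I \<rightarrow>\<^sub>E S). p (fst z) * ((\<Prod>j\<in>I. p (snd z j)) * f ((snd z)(i := fst z))))"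
  proof (rule sum.cong[OF refl])
    fix z assume "z \<in> S \<times> (I \<rightarrow>\<^sub>E S)"
    have "(\<Prod>j\<in>I. p (((snd z)(i := fst z)) j)) = (\<Prod>j\<in>I. p (snd z j))"
      using assms by (intro prod.cong) auto
    then show "(\<Prod>j\<in>insert i I. p (((snd z)(i := fst z)) j)) * f ((snd z)(i := fst z)) = p (fst z) * ((\<Prod>j\<in>I. p (snd z j)) * f ((snd z)(i := fst z)))"
      using assms by simp
  qed
  also have "\<dots> = (\<Sum>y\<in>S. \<Sum>x\<in>(I \<rightarrow>\<^sub>E S). p y * ((\<Prod>j\<in>I. p (x j)) * f (x(i := y))))"
    by (subst sum.cartesian_product) (simp add: case_prod_beta)
  also have "\<dots> = (\<Sum>x\<in>(I \<rightarrow>\<^sub>E S). \<Sum>y\<in>S. p y * ((\<Prod>j\<in>I. p (x j)) * f (x(i := y))))"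
    by (rule sum.swap)
  also have "\<dots> = Ew p S I (\<lambda>x. \<Sum>y\<in>S. p y * f (x(i:=y)))"
    unfolding Ew_def by (simp add: sum_distrib_left mult_ac)
  finally show ?thesis .
qed

lemma Ew_linear:
  "Ew p S I (\<lambda>x. a * f x + b * g x) = a * Ew p S I f + b * Ew p S I g"
  by (simp add: Ew_def sum.distrib sum_distrib_left algebra_simps)

lemma Ew_mono:
  assumes "\<And>s. s \<in> S \<Longrightarrow> p s \<ge> 0" "\<And>x. x \<in> (I \<rightarrow>\<^sub>E S) \<Longrightarrow> f x \<le> g x"
  shows "Ew p S I f \<le> Ew p S I g"
  unfolding Ew_def using assms
  by (intro sum_mono mult_left_mono prod_nonneg) (auto simp: PiE_iff)

lemma Ew_const:
  assumes "finite I" "(\<Sum>s\<in>S. p s) = 1"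
  shows "Ew p S I (\<lambda>_. c) = c"
  using assms(1)
proof (induction I rule: finite_induct)
  case empty then show ?case by (simp add: Ew_empty)
next
  case (insert i I)
  then show ?case using assms(2) by (simp add: Ew_insert flip: sum_distrib_right)
qed

definition bdI :: "'b set \<Rightarrow> nat set \<Rightarrow> ((nat \<Rightarrow> 'b) \<Rightarrow> real) \<Rightarrow> (nat \<Rightarrow> real) \<Rightarrow> bool" where
  "bdI S I f c \<longleftrightarrow> (\<forall>i\<in>I. \<forall>x\<in>I \<rightarrow>\<^sub>E S. \<forall>y\<in>S. \<bar>f x - f (x(i := y))\<bar> \<le> c i)"

lemma Ew_mult_const: "Ew p S I (\<lambda>x. f x * c) = Ew p S I f * c"
  by (simp add: Ew_def sum_distrib_right mult.assoc)

lemma mgf: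
  assumes I: "finite I" and S: "finite S" and p: "\<And>s. s \<in> S \<Longrightarrow> p s \<ge> 0" and p1: "(\<Sum>s\<in>S. p s) = 1"
    and l: "l > 0"
  shows "bdI S I f c \<Longrightarrow> Ew p S I (\<lambda>x. exp (l * (f x - Ew p S I f))) \<le> exp (l\<^sup>2 * (\<Sum>i\<in>I. (c i)\<^sup>2) / 8)"
  using I
proof (induction I arbitrary: f rule: finite_induct)
  case empty
  then show ?case by (simp add: Ew_empty)
next
  case (insert i I)
  define g where "g x = (\<Sum>y\<in>S. p y * f (x(i:=y)))" for x
  define m where "m = Ew p S I g"
  have Ef: "Ew p S (insert i I) f = m" unfolding m_def g_def using insert by (simp add: Ew_insert)
  have bdg: "bdI S I g c"
    unfolding bdI_def
  proof (intro ballI)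
    fix j x z assume j: "j \<in> I" and x: "x \<in> I \<rightarrow>\<^sub>E S" and z: "z \<in> S"
    have ij: "i \<noteq> j" using j insert by auto
    have "\<bar>g x - g (x(j := z))\<bar> = \<bar>\<Sum>y\<in>S. p y * (f (x(i:=y)) - f ((x(i:=y))(j := z)))\<bar>"
      unfolding g_def using ij by (simp add: sum_subtractf[symmetric] algebra_simps fun_upd_twist)
    also have "\<dots> \<le> (\<Sum>y\<in>S. \<bar>p y * (f (x(i:=y)) - f ((x(i:=y))(j := z)))\<bar>)"
      by (rule sum_abs)
    also have "\<dots> \<le> (\<Sum>y\<in>S. p y * c j)"
    proof (rule sum_mono)
      fix y assume y: "y \<in> S"
      have "x(i:=y) \<in> insert i I \<rightarrow>\<^sub>E S" using x y by (auto simp: PiE_iff)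
      then have "\<bar>f (x(i:=y)) - f ((x(i:=y))(j := z))\<bar> \<le> c j"
        using insert.prems j z unfolding bdI_def by blast
      then show "\<bar>p y * (f (x(i:=y)) - f ((x(i:=y))(j := z)))\<bar> \<le> p y * c j"
        using p[OF y] by (simp add: abs_mult mult_left_mono)
    qed
    also have "\<dots> = c j" using p1 by (simp flip: sum_distrib_right)
    finally show "\<bar>g x - g (x(j := z))\<bar> \<le> c j" .
  qed
  have inner: "(\<Sum>y\<in>S. p y * exp (l * (f (x(i:=y)) - g x))) \<le> exp (l\<^sup>2 * (c i)\<^sup>2 / 8)"
    if x: "x \<in> I \<rightarrow>\<^sub>E S" for x
  proof (rule HL1[OF S p p1 _ _ l])
    fix s t assume s: "s \<in> S" and t: "t \<in> S"
    have "x(i:=t) \<in> insert i I \<rightarrow>\<^sub>E S" using x t by (auto simp: PiE_iff)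
    then have "\<bar>f (x(i:=t)) - f ((x(i:=t))(i := s))\<bar> \<le> c i"
      using insert.prems s unfolding bdI_def by blast
    then show "f (x(i:=s)) - g x - (f (x(i:=t)) - g x) \<le> c i" by simp
  next
    show "(\<Sum>s\<in>S. p s * (f (x(i:=s)) - g x)) = 0"
      using p1 by (simp add: right_diff_distrib sum_subtractf g_def flip: sum_distrib_right)
  qed
  have "Ew p S (insert i I) (\<lambda>x. exp (l * (f x - Ew p S (insert i I) f)))
      = Ew p S I (\<lambda>x. \<Sum>y\<in>S. p y * exp (l * (f (x(i:=y)) - m)))"
    using insert by (simp add: Ew_insert Ef)
  also have "\<dots> = Ew p S I (\<lambda>x. exp (l * (g x - m)) * (\<Sum>y\<in>S. p y * exp (l * (f (x(i:=y)) - g x))))"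
    unfolding Ew_def
    by (intro sum.cong refl arg_cong2[where f="(*)"])
       (simp add: sum_distrib_left algebra_simps flip: exp_add)
  also have "\<dots> \<le> Ew p S I (\<lambda>x. exp (l * (g x - m)) * exp (l\<^sup>2 * (c i)\<^sup>2 / 8))"
    by (intro Ew_mono p mult_left_mono inner) auto
  also have "\<dots> = Ew p S I (\<lambda>x. exp (l * (g x - m))) * exp (l\<^sup>2 * (c i)\<^sup>2 / 8)"
    by (rule Ew_mult_const)
  also have "\<dots> \<le> exp (l\<^sup>2 * (\<Sum>i\<in>I. (c i)\<^sup>2) / 8) * exp (l\<^sup>2 * (c i)\<^sup>2 / 8)"
    using insert.IH[OF bdg] unfolding m_def by (intro mult_right_mono) auto
  also have "\<dots> = exp (l\<^sup>2 * (\<Sum>i\<in>insert i I. (c i)\<^sup>2) / 8)"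
    using insert by (simp add: algebra_simps add_divide_distrib flip: exp_add)
  finally show ?case .
qed

lemma tail1:
  assumes I: "finite I" and S: "finite S" and p: "\<And>s. s \<in> S \<Longrightarrow> p s \<ge> 0" and p1: "(\<Sum>s\<in>S. p s) = 1"
    and bd: "bdI S I f c" and C: "(\<Sum>i\<in>I. (c i)\<^sup>2) > 0" and t: "t > 0"
  shows "Ew p S I (\<lambda>x. if f x - Ew p S I f \<ge> t then 1 else 0) \<le> exp (- 2 * t\<^sup>2 / (\<Sum>i\<in>I. (c i)\<^sup>2))"
proof -
  define C where "C = (\<Sum>i\<in>I. (c i)\<^sup>2)"
  define l where "l = 4 * t / C"
  have l: "l > 0" using C t by (simp add: l_def C_def)
  have "Ew p S I (\<lambda>x. if f x - Ew p S I f \<ge> t then 1 else 0)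
      \<le> Ew p S I (\<lambda>x. exp (l * (f x - Ew p S I f)) * exp (- (l * t)))"
  proof (rule Ew_mono[OF p])
    fix x
    show "(if f x - Ew p S I f \<ge> t then 1 else 0) \<le> exp (l * (f x - Ew p S I f)) * exp (- (l * t))"
    proof (cases "f x - Ew p S I f \<ge> t")
      case True
      then have "l * t \<le> l * (f x - Ew p S I f)" using l by (intro mult_left_mono) auto
      then have "0 \<le> l * (f x - Ew p S I f) + - (l * t)" by simp
      then have "1 \<le> exp (l * (f x - Ew p S I f) + - (l * t))" by simp
      moreover have "exp (l * (f x - Ew p S I f)) * exp (- (l * t)) = exp (l * (f x - Ew p S I f) + - (l * t))"
        by (rule mult_exp_exp)
      ultimately show ?thesis using True by simp
    qed simp
  qed auto
  also have "\<dots> = Ew p S I (\<lambda>x. exp (l * (f x - Ew p S I f))) * exp (- (l * t))"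
    by (rule Ew_mult_const)
  also have "\<dots> \<le> exp (l\<^sup>2 * C / 8) * exp (- (l * t))"
    using mgf[OF I S p p1 l bd] by (simp add: C_def)
  also have "\<dots> = exp (- 2 * t\<^sup>2 / C)"
    unfolding l_def using C by (simp add: C_def flip: exp_add) (simp add: field_simps power2_eq_square)
  finally show ?thesis by (simp add: C_def)
qed

lemma tail2:
  assumes I: "finite I" and S: "finite S" and p: "\<And>s. s \<in> S \<Longrightarrow> p s \<ge> 0" and p1: "(\<Sum>s\<in>S. p s) = 1"
    and bd: "bdI S I f c" and C: "(\<Sum>i\<in>I. (c i)\<^sup>2) > 0" and t: "t > 0"
  shows "Ew p S I (\<lambda>x. if \<bar>f x - Ew p S I f\<bar> \<ge> t then 1 else 0) \<le> 2 * exp (- 2 * t\<^sup>2 / (\<Sum>i\<in>I. (c i)\<^sup>2))"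
proof -
  have bd': "bdI S I (\<lambda>x. - f x) c" using bd unfolding bdI_def by (simp add: abs_minus_commute)
  have En: "Ew p S I (\<lambda>x. - f x) = - Ew p S I f"
    using Ew_linear[of p S I "-1" f 0 f] by simp
  have "Ew p S I (\<lambda>x. if \<bar>f x - Ew p S I f\<bar> \<ge> t then 1 else 0)
     \<le> Ew p S I (\<lambda>x. 1 * (if f x - Ew p S I f \<ge> t then 1 else 0) + 1 * (if - f x - Ew p S I (\<lambda>x. - f x) \<ge> t then 1 else 0))"
    by (rule Ew_mono[OF p]) (auto simp: En)
  also have "\<dots> \<le> exp (- 2 * t\<^sup>2 / (\<Sum>i\<in>I. (c i)\<^sup>2)) + exp (- 2 * t\<^sup>2 / (\<Sum>i\<in>I. (c i)\<^sup>2))"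
    unfolding Ew_linear using tail1[OF I S p p1 bd C t] tail1[OF I S p p1 bd' C t]
    by simp
  finally show ?thesis by simp
qed

lemma pq_bound:
  fixes q q' :: real
  assumes "0 \<le> q" "q \<le> 1" "0 \<le> q'" "q' \<le> 1"
  shows "\<bar>q * (1 - q) - q' * (1 - q')\<bar> \<le> \<bar>q - q'\<bar>"
proof -
  have "q * (1 - q) - q' * (1 - q') = (q - q') * (1 - q - q')" by algebra
  moreover have "\<bar>1 - q - q'\<bar> \<le> 1" using assms by auto
  ultimately show ?thesis by (simp add: abs_mult mult_left_le)
qed

lemma phat_range:
  assumes "M > 0"
  shows "0 \<le> phat M x v \<and> phat M x v \<le> 1"
proof -
  have "(\<Sum>j\<in>{1..M}. (if x j = v then 1 else 0 :: real)) \<le> (\<Sum>j\<in>{1..M}. 1)"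
    by (intro sum_mono) auto
  then have "(\<Sum>j\<in>{1..M}. (if x j = v then 1 else 0 :: real)) \<le> real M" by simp
  moreover have "0 \<le> (\<Sum>j\<in>{1..M}. (if x j = v then 1 else 0 :: real))" by (intro sum_nonneg) auto
  ultimately show ?thesis using assms unfolding phat_def by (auto simp: divide_le_eq_1)
qed

lemma phat_upd:
  assumes "i \<in> {1..M}"
  shows "phat M (x(i := y)) v = phat M x v + ((if y = v then 1 else 0) - (if x i = v then 1 else 0)) / real M"
proof -
  have "(\<Sum>j\<in>{1..M}. (if (x(i := y)) j = v then 1 else 0 :: real))
      = (if y = v then 1 else 0) + (\<Sum>j\<in>{1..M} - {i}. (if (x(i := y)) j = v then 1 else 0))"
    using assms by (subst sum.remove[of _ i]) auto
  also have "(\<Sum>j\<in>{1..M} - {i}. (if (x(i := y)) j = v then 1 else 0 :: real))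
      = (\<Sum>j\<in>{1..M} - {i}. (if x j = v then 1 else 0))"
    by (intro sum.cong) auto
  also have "\<dots> = (\<Sum>j\<in>{1..M}. (if x j = v then 1 else 0)) - (if x i = v then 1 else 0)"
    using assms by (subst sum.remove[of _ i]) auto
  finally show ?thesis unfolding phat_def by (simp add: diff_divide_distrib add_divide_distrib)
qed

lemma Lfun_bd:
  assumes "i \<in> {1..M}" "y \<in> {1..k}"
  shows "\<bar>Lfun k M x - Lfun k M (x(i := y))\<bar> \<le> 2 / real M"
proof -
  have M: "M > 0" using assms by auto
  have "\<bar>Lfun k M x - Lfun k M (x(i := y))\<bar>
      = \<bar>\<Sum>v\<in>{1..k}. phat M x v * (1 - phat M x v) - phat M (x(i := y)) v * (1 - phat M (x(i := y)) v)\<bar>"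
    unfolding Lfun_def by (simp add: sum_subtractf)
  also have "\<dots> \<le> (\<Sum>v\<in>{1..k}. \<bar>phat M x v * (1 - phat M x v) - phat M (x(i := y)) v * (1 - phat M (x(i := y)) v)\<bar>)"
    by (rule sum_abs)
  also have "\<dots> \<le> (\<Sum>v\<in>{1..k}. (if y = v then 1 else 0) / real M + (if x i = v then 1 else 0) / real M)"
  proof (rule sum_mono)
    fix v
    have "\<bar>phat M x v * (1 - phat M x v) - phat M (x(i := y)) v * (1 - phat M (x(i := y)) v)\<bar>
        \<le> \<bar>phat M x v - phat M (x(i := y)) v\<bar>"
      using phat_range[OF M] by (intro pq_bound) auto
    also have "\<dots> = \<bar>(if y = v then 1 else 0) - (if x i = v then 1 else 0)\<bar> / real M"
      using assms(1) by (simp add: phat_upd)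
    also have "\<dots> \<le> (if y = v then 1 else 0) / real M + (if x i = v then 1 else 0) / real M"
      using M by (auto simp: divide_simps)
    finally show "\<bar>phat M x v * (1 - phat M x v) - phat M (x(i := y)) v * (1 - phat M (x(i := y)) v)\<bar>
        \<le> (if y = v then 1 else 0) / real M + (if x i = v then 1 else 0) / real M" .
  qed
  also have "\<dots> = 1 / real M + (if x i \<in> {1..k} then 1 else 0) / real M"
    using assms(2) by (simp add: sum.distrib flip: sum_divide_distrib)
  also have "\<dots> \<le> 2 / real M" using M by (auto simp: divide_simps)
  finally show ?thesis .
qed

lemma Lfun_restrict: "Lfun k M (restrict x {1..M}) = Lfun k M x"
  unfolding Lfun_def phat_def
  by (intro sum.cong refl arg_cong2[where f="(*)"] arg_cong2[where f="(/)"] arg_cong2[where f="(-)"]) auto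

theorem lemma2:
  fixes P :: "'w measure" and X :: "nat \<Rightarrow> 'w \<Rightarrow> nat" and k M :: nat
  assumes "prob_space P"
    and "\<And>j. j \<in> {1..M} \<Longrightarrow> X j \<in> measurable P (count_space {1..k})"
    and "prob_space.indep_vars P (\<lambda>_. count_space {1..k}) X {1..M}"
    and "\<And>j. j \<in> {1..M} \<Longrightarrow>
           distr P (count_space {1..k}) (X j) = distr P (count_space {1..k}) (X 1)"
  shows "bounded_difference {1..k} M (Lfun k M) (\<lambda>_. 2 / real M) \<and>
         (\<forall>t>0. measure P {\<omega> \<in> space P.
                   \<bar>Lfun k M (\<lambda>j. X j \<omega>) - (\<integral>\<omega>'. Lfun k M (\<lambda>j. X j \<omega>') \<partial>P)\<bar> \<ge> t}
                \<le> 2 * exp (- (real M * t\<^sup>2 / 2)))"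
proof -
  interpret prob_space P by fact
  have bd: "bounded_difference {1..k} M (Lfun k M) (\<lambda>_. 2 / real M)"
    unfolding bounded_difference_def using Lfun_bd by blast
  have tail: "measure P {\<omega> \<in> space P.
                   \<bar>Lfun k M (\<lambda>j. X j \<omega>) - (\<integral>\<omega>'. Lfun k M (\<lambda>j. X j \<omega>') \<partial>P)\<bar> \<ge> t}
                \<le> 2 * exp (- (real M * t\<^sup>2 / 2))" if t: "t > 0" for t
  proof (cases "M = 0")
    case True
    then have "Lfun k M x = 0" for x by (simp add: Lfun_def phat_def)
    then have e: "{\<omega> \<in> space P. \<bar>Lfun k M (\<lambda>j. X j \<omega>) - (\<integral>\<omega>'. Lfun k M (\<lambda>j. X j \<omega>') \<partial>P)\<bar> \<ge> t} = {}"
      using t by simp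
    show ?thesis by (simp only: e measure_empty) simp
  next
    case False
    define S where "S = {1..k}"
    define I where "I = {1..M}"
    have I1: "1 \<in> I" "I \<noteq> {}" "finite I" using False by (auto simp: I_def)
    have SF: "finite S" by (simp add: S_def)
    have Xm: "X j \<in> measurable P (count_space S)" if "j \<in> I" for j
      using assms(2) that by (simp add: S_def I_def)
    have Xs: "X j \<omega> \<in> S" if "j \<in> I" "\<omega> \<in> space P" for j \<omega>
      using measurable_space[OF Xm[OF that(1)] that(2)] by simp
    have evj: "X j -` {v} \<inter> space P \<in> events" if "j \<in> I" "v \<in> S" for j v
      using that by (intro measurable_sets[OF Xm]) auto
    define p where "p v = prob (X 1 -` {v} \<inter> space P)" for v
    have pj: "prob (X j -` {v} \<inter> space P) = p v" if "j \<in> I" "v \<in> S" for j v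
    proof -
      have "prob (X j -` {v} \<inter> space P) = measure (distr P (count_space S) (X j)) {v}"
        using that by (subst measure_distr[OF Xm]) auto
      also have "\<dots> = measure (distr P (count_space S) (X 1)) {v}"
        using assms(4)[of j] that unfolding S_def I_def by simp
      also have "\<dots> = p v"
        using that I1 by (subst measure_distr[OF Xm]) (auto simp: p_def)
      finally show ?thesis .
    qed
    have p0: "\<And>s. s \<in> S \<Longrightarrow> p s \<ge> 0" by (simp add: p_def)
    have p1: "(\<Sum>s\<in>S. p s) = 1"
    proof -
      have "space P = (\<Union>v\<in>S. X 1 -` {v} \<inter> space P)" using Xs[OF I1(1)] by auto
      then have "1 = prob (\<Union>v\<in>S. X 1 -` {v} \<inter> space P)" using prob_space by simp
      also have "\<dots> = (\<Sum>v\<in>S. prob (X 1 -` {v} \<inter> space P))"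
        apply (rule finite_measure_finite_Union[OF SF])
        using evj[OF I1(1)] apply blast
        by (auto simp: disjoint_family_on_def)
      finally show ?thesis by (simp add: p_def)
    qed
    define Y where "Y \<omega> = restrict (\<lambda>j. X j \<omega>) I" for \<omega>
    have YT: "Y \<omega> \<in> I \<rightarrow>\<^sub>E S" if "\<omega> \<in> space P" for \<omega>
      using Xs that by (auto simp: Y_def)
    define A where "A x = {\<omega> \<in> space P. Y \<omega> = x}" for x
    have A_eq: "A x = (\<Inter>j\<in>I. X j -` {x j} \<inter> space P)" if x: "x \<in> I \<rightarrow>\<^sub>E S" for x
    proof
      show "A x \<subseteq> (\<Inter>j\<in>I. X j -` {x j} \<inter> space P)"
        by (auto simp: A_def Y_def)
      show "(\<Inter>j\<in>I. X j -` {x j} \<inter> space P) \<subseteq> A x"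
      proof
        fix \<omega> assume w: "\<omega> \<in> (\<Inter>j\<in>I. X j -` {x j} \<inter> space P)"
        then have "\<omega> \<in> space P" using I1 by auto
        moreover have "Y \<omega> = x"
        proof
          fix j show "Y \<omega> j = x j"
            using w x I1(2) by (cases "j \<in> I") (auto simp: Y_def PiE_iff extensional_def)
        qed
        ultimately show "\<omega> \<in> A x" by (simp add: A_def)
      qed
    qed
    have A_prob: "prob (A x) = (\<Prod>j\<in>I. p (x j))" if x: "x \<in> I \<rightarrow>\<^sub>E S" for x
    proof -
      have ind: "indep_sets (\<lambda>i. {X i -` B \<inter> space P | B. B \<in> sets (count_space {1..k})}) I"
        using assms(3) unfolding indep_vars_def2 I_def by blast
      have "prob (A x) = prob (\<Inter>j\<in>I. X j -` {x j} \<inter> space P)" using A_eq[OF x] by simp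
      also have "\<dots> = (\<Prod>j\<in>I. prob (X j -` {x j} \<inter> space P))"
        using x by (intro indep_setsD[OF ind subset_refl I1(2,3)]) (auto simp: S_def PiE_iff)
      also have "\<dots> = (\<Prod>j\<in>I. p (x j))"
        using x by (intro prod.cong refl pj) (auto simp: PiE_iff)
      finally show ?thesis .
    qed
    have A_sets: "A x \<in> events" if x: "x \<in> I \<rightarrow>\<^sub>E S" for x
      unfolding A_eq[OF x] using I1 x
      by (intro sets.finite_INT measurable_sets[OF Xm]) (auto simp: PiE_iff)
    have integ: "(\<integral>\<omega>. G (Y \<omega>) \<partial>P) = Ew p S I G" for G
    proof -
      have "(\<integral>\<omega>. G (Y \<omega>) \<partial>P) = (\<integral>\<omega>. (\<Sum>x\<in>I \<rightarrow>\<^sub>E S. G x * indicator (A x) \<omega>) \<partial>P)"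
      proof (rule Bochner_Integration.integral_cong[OF refl])
        fix \<omega> assume w: "\<omega> \<in> space P"
        have "(\<Sum>x\<in>I \<rightarrow>\<^sub>E S. G x * indicator (A x) \<omega>) = (\<Sum>x\<in>I \<rightarrow>\<^sub>E S. if x = Y \<omega> then G x else 0)"
          using w by (intro sum.cong refl) (auto simp: A_def indicator_def)
        also have "\<dots> = G (Y \<omega>)" using YT[OF w] I1 SF by (simp add: finite_PiE)
        finally show "G (Y \<omega>) = (\<Sum>x\<in>I \<rightarrow>\<^sub>E S. G x * indicator (A x) \<omega>)" by simp
      qed
      also have "\<dots> = (\<Sum>x\<in>I \<rightarrow>\<^sub>E S. G x * prob (A x))"
        using A_sets by (subst Bochner_Integration.integral_sum)
          (auto intro!: integrable_mult_right integrable_real_indicator A_sets simp: Int_absorb2 A_def less_top[symmetric])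
      also have "\<dots> = Ew p S I G"
        unfolding Ew_def by (intro sum.cong refl) (simp add: A_prob mult.commute)
      finally show ?thesis .
    qed
    have LY: "Lfun k M (\<lambda>j. X j \<omega>) = Lfun k M (Y \<omega>)" for \<omega>
      unfolding Y_def I_def by (rule Lfun_restrict[symmetric])
    define E where "E = Ew p S I (Lfun k M)"
    have EE: "(\<integral>\<omega>'. Lfun k M (\<lambda>j. X j \<omega>') \<partial>P) = E"
      unfolding LY E_def by (rule integ)
    define B where "B = {\<omega> \<in> space P. \<bar>Lfun k M (\<lambda>j. X j \<omega>) - E\<bar> \<ge> t}"
    have "measure P B = (\<integral>\<omega>. indicator B \<omega> \<partial>P)"
      by (simp add: Bochner_Integration.integral_indicator B_def Int_absorb2)
    also have "\<dots> = (\<integral>\<omega>. (\<lambda>x. if \<bar>Lfun k M x - E\<bar> \<ge> t then 1 else 0) (Y \<omega>) \<partial>P)"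
      by (intro Bochner_Integration.integral_cong refl) (auto simp: B_def LY indicator_def)
    also have "\<dots> = Ew p S I (\<lambda>x. if \<bar>Lfun k M x - E\<bar> \<ge> t then 1 else 0)"
      by (rule integ)
    also have "\<dots> \<le> 2 * exp (- 2 * t\<^sup>2 / (\<Sum>i\<in>I. (2 / real M)\<^sup>2))"
      unfolding E_def
    proof (rule tail2[OF I1(3) SF p0 p1 _ _ t])
      show "bdI S I (Lfun k M) (\<lambda>_. 2 / real M)"
        unfolding bdI_def S_def I_def using Lfun_bd by blast
      show "(\<Sum>i\<in>I. (2 / real M)\<^sup>2) > 0" using False by (simp add: I_def)
    qed
    also have "\<dots> = 2 * exp (- (real M * t\<^sup>2 / 2))"
      using False by (simp add: I_def power2_eq_square field_simps)
    finally show ?thesis using EE by (simp add: B_def)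
  qed
  show ?thesis using bd tail by blast
qed

end
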